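(* There exists a unique algebra homomorphism $\sharp:\Re\to U(\mathfrak{sl}_2)$ that sends \[ A\mapsto \frac{(E+F-2)(E+F+2)}{16},\quad B\mapsto \frac{(H-2)(H+2)}{16},\quad C\mapsto \frac{(\mathbf i E-\mathbf i F-2)(\mathbf i E-\mathbf i F+2)}{16},\quad \Delta\mapsto \frac{(H+2)F^2-(H-2)E^2}{64}. \] Moreover $\sharp(\alpha)=\sharp(\beta)=\sharp(\gamma)=0$ and $\sharp(\delta)=\frac{\Lambda-6}{8}$.
   Context: All algebras are unital associative over $\mathbb C$, homomorphisms are unital, $[x,y]=xy-yx$, and $\mathbf i=\sqrt{-1}$. $U(\mathfrak{sl}_2)$ is the algebra generated by $E,F,H$ with relations $[H,E]=2E$, $[H,F]=-2F$, $[E,F]=H$; its Casimir element is $\Lambda=EF+FE+\frac{H^2}{2}$. The universal Racah algebra $\Re$ is the algebra generated by $A,B,C,\Delta$ with relations $[A,B]=[B,C]=[C,A]=2\Delta$ and such that each of $[A,\Delta]+AC-BA$, $[B,\Delta]+BA-CB$, $[C,\Delta]+CB-AC$ is central in $\Re$. Denote these three central elements by $\alpha,\beta,\gamma$ respectively, and let $\delta=A+B+C$ (which is central in $\Re$). *)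

theory Defs
  imports Complex_Main "HOL-Library.Poly_Mapping" "HOL-Algebra.QuotRing"
begin

instantiation list :: (type) monoid_add
begin
definition zero_list_def: "0 = []"
definition plus_list_def: "xs + ys = xs @ ys"
instance by standard (auto simp: zero_list_def plus_list_def)
end

text \<open>The free algebra \<open>\<complex>\<langle>g\<rangle>\<close>: finitely supported complex linear combinations of words,
  with convolution product (concatenation of words).\<close>
type_synonym 'g freealg = "'g list \<Rightarrow>\<^sub>0 complex"

definition free_ring :: "('g freealg) ring" where
  "free_ring = \<lparr>carrier = UNIV, mult = (*), one = 1, zero = 0, add = (+)\<rparr>"

definition gen :: "'g \<Rightarrow> 'g freealg" where
  "gen g = Poly_Mapping.single [g] 1"

definition scal :: "complex \<Rightarrow> 'g freealg" where
  "scal c = Poly_Mapping.single [] c"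

definition comm :: "'a::ring \<Rightarrow> 'a \<Rightarrow> 'a" where
  "comm x y = x * y - y * x"

definition pres_alg :: "'g freealg set \<Rightarrow> ('g freealg set) ring" where
  "pres_alg rels = free_ring Quot (genideal free_ring rels)"

definition cls :: "'g freealg set \<Rightarrow> 'g freealg \<Rightarrow> 'g freealg set" where
  "cls rels x = genideal free_ring rels +>\<^bsub>free_ring\<^esub> x"

text \<open>Unital \<open>\<complex>\<close>-algebra homomorphisms between presented algebras
  (ring homomorphisms compatible with the scalars; extensional so they are
  determined by their values on the carrier).\<close>
definition calg_hom :: "'g freealg set \<Rightarrow> 'h freealg set \<Rightarrow> ('g freealg set \<Rightarrow> 'h freealg set) \<Rightarrow> bool" where
  "calg_hom rels1 rels2 f \<longleftrightarrow>
     f \<in> ring_hom (pres_alg rels1) (pres_alg rels2) \<and>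
     f \<in> extensional (carrier (pres_alg rels1)) \<and>
     (\<forall>c. f (cls rels1 (scal c)) = cls rels2 (scal c))"

datatype sl2gen = GE | GF | GH

abbreviation "eE \<equiv> gen GE"
abbreviation "eF \<equiv> gen GF"
abbreviation "eH \<equiv> gen GH"

definition sl2_rels :: "sl2gen freealg set" where
  "sl2_rels = {comm eH eE - 2 * eE, comm eH eF + 2 * eF, comm eE eF - eH}"

abbreviation "Usl2 \<equiv> pres_alg sl2_rels"

definition casimir :: "sl2gen freealg" where
  "casimir = eE * eF + eF * eE + scal (1/2) * eH ^ 2"

datatype racahgen = RA | RB | RC | RD

abbreviation "rA \<equiv> gen RA"
abbreviation "rB \<equiv> gen RB"
abbreviation "rC \<equiv> gen RC"
abbreviation "rD \<equiv> gen RD"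

definition r_alpha :: "racahgen freealg" where
  "r_alpha = comm rA rD + rA * rC - rB * rA"
definition r_beta :: "racahgen freealg" where
  "r_beta = comm rB rD + rB * rA - rC * rB"
definition r_gamma :: "racahgen freealg" where
  "r_gamma = comm rC rD + rC * rB - rA * rC"
definition r_delta :: "racahgen freealg" where
  "r_delta = rA + rB + rC"

definition racah_rels :: "racahgen freealg set" where
  "racah_rels = {comm rA rB - 2 * rD, comm rB rC - 2 * rD, comm rC rA - 2 * rD}
     \<union> {comm r x | r x. r \<in> {r_alpha, r_beta, r_gamma}}"

abbreviation "Racah \<equiv> pres_alg racah_rels"

end

theory Submission
  imports Defs
begin


type_synonym zpl = "((nat \<times> nat \<times> nat) \<times> int) list"

definition zle :: "zpl \<Rightarrow> zpl" where
  "zle l = map (\<lambda>((a,b,c),k). ((Suc a,b,c),k)) l"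
definition zscl :: "int \<Rightarrow> zpl \<Rightarrow> zpl" where
  "zscl k l = map (\<lambda>(m,j). (m, k*j)) l"

fun zlhm :: "nat \<Rightarrow> nat \<Rightarrow> nat \<Rightarrow> zpl" where
  "zlhm 0 b c = [((0,Suc b,c),1)]"
| "zlhm (Suc a) b c = zle (zlhm a b c) @ [((Suc a,b,c),2)]"

definition zlh :: "zpl \<Rightarrow> zpl" where
  "zlh l = concat (map (\<lambda>((a,b,c),k). zscl k (zlhm a b c)) l)"

fun zlfm :: "nat \<Rightarrow> nat \<Rightarrow> nat \<Rightarrow> zpl" where
  "zlfm 0 0 c = [((0,0,Suc c),1)]"
| "zlfm 0 (Suc b) c = zlh (zlfm 0 b c) @ zscl 2 (zlfm 0 b c)"
| "zlfm (Suc a) b c = zle (zlfm a b c) @ zscl (-1) (zlhm a b c)"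

definition zlf :: "zpl \<Rightarrow> zpl" where
  "zlf l = concat (map (\<lambda>((a,b,c),k). zscl k (zlfm a b c)) l)"

definition zcf :: "zpl \<Rightarrow> nat \<times> nat \<times> nat \<Rightarrow> int" where
  "zcf l m = sum_list (map snd (filter (\<lambda>p. fst p = m) l))"

definition znorm :: "zpl \<Rightarrow> zpl" where
  "znorm l = filter (\<lambda>p. snd p \<noteq> 0) (map (\<lambda>m. (m, zcf l m)) (remdups (map fst l)))"

definition zmul :: "zpl \<Rightarrow> zpl \<Rightarrow> zpl" where
  "zmul l1 l2 = znorm (concat (map (\<lambda>((a,b,c),k). zscl k ((zle ^^ a) ((zlh ^^ b) ((zlf ^^ c) l2)))) l1))"

lemma oi_comm: "of_int k * (x * y) = x * (of_int k * (y::'a::ring_1))"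
  by (metis mult.assoc mult_of_int_commute)

datatype zex = Ge | Gf | Gh | Ni int | Ad zex zex | Mu zex zex | Ng zex

fun ztonf :: "zex \<Rightarrow> zpl" where
  "ztonf Ge = [((1,0,0),1)]" | "ztonf Gf = [((0,0,1),1)]" | "ztonf Gh = [((0,1,0),1)]"
| "ztonf (Ni k) = [((0,0,0),k)]" | "ztonf (Ad x y) = ztonf x @ ztonf y"
| "ztonf (Mu x y) = zmul (ztonf x) (ztonf y)" | "ztonf (Ng x) = zscl (-1) (ztonf x)"

lemma CI1: "znorm (ztonf (Ad (Mu (Mu (Ad (Ad Ge Gf) (Ng (Ni 2))) (Ad (Ad Ge Gf) (Ni 2))) (Mu (Ad Gh (Ng (Ni 2))) (Ad Gh (Ni 2)))) (Ng (Mu (Mu (Ad Gh (Ng (Ni 2))) (Ad Gh (Ni 2))) (Mu (Ad (Ad Ge Gf) (Ng (Ni 2))) (Ad (Ad Ge Gf) (Ni 2)))))) @ zscl (-1) (ztonf (Mu (Ni 8) (Ad (Mu (Ad Gh (Ni 2)) (Mu Gf Gf)) (Ng (Mu (Ad Gh (Ng (Ni 2))) (Mu Ge Ge))))))) = []"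
  by code_simp

lemma CI2: "znorm (ztonf (Ad (Mu (Mu (Ad Gh (Ng (Ni 2))) (Ad Gh (Ni 2))) (Ad (Ng (Mu (Ad Ge (Ng Gf)) (Ad Ge (Ng Gf)))) (Ng (Ni 4)))) (Ng (Mu (Ad (Ng (Mu (Ad Ge (Ng Gf)) (Ad Ge (Ng Gf)))) (Ng (Ni 4))) (Mu (Ad Gh (Ng (Ni 2))) (Ad Gh (Ni 2)))))) @ zscl (-1) (ztonf (Mu (Ni 8) (Ad (Mu (Ad Gh (Ni 2)) (Mu Gf Gf)) (Ng (Mu (Ad Gh (Ng (Ni 2))) (Mu Ge Ge))))))) = []"
  by code_simp

lemma CI3: "znorm (ztonf (Ad (Mu (Ad (Ng (Mu (Ad Ge (Ng Gf)) (Ad Ge (Ng Gf)))) (Ng (Ni 4))) (Mu (Ad (Ad Ge Gf) (Ng (Ni 2))) (Ad (Ad Ge Gf) (Ni 2)))) (Ng (Mu (Mu (Ad (Ad Ge Gf) (Ng (Ni 2))) (Ad (Ad Ge Gf) (Ni 2))) (Ad (Ng (Mu (Ad Ge (Ng Gf)) (Ad Ge (Ng Gf)))) (Ng (Ni 4)))))) @ zscl (-1) (ztonf (Mu (Ni 8) (Ad (Mu (Ad Gh (Ni 2)) (Mu Gf Gf)) (Ng (Mu (Ad Gh (Ng (Ni 2))) (Mu Ge Ge))))))) = []"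
  by code_simp

lemma CI4: "znorm (ztonf (Ad (Ad (Mu (Mu (Ad (Ad Ge Gf) (Ng (Ni 2))) (Ad (Ad Ge Gf) (Ni 2))) (Ad (Mu (Ad Gh (Ni 2)) (Mu Gf Gf)) (Ng (Mu (Ad Gh (Ng (Ni 2))) (Mu Ge Ge))))) (Ng (Mu (Ad (Mu (Ad Gh (Ni 2)) (Mu Gf Gf)) (Ng (Mu (Ad Gh (Ng (Ni 2))) (Mu Ge Ge)))) (Mu (Ad (Ad Ge Gf) (Ng (Ni 2))) (Ad (Ad Ge Gf) (Ni 2)))))) (Mu (Ni 4) (Ad (Mu (Mu (Ad (Ad Ge Gf) (Ng (Ni 2))) (Ad (Ad Ge Gf) (Ni 2))) (Ad (Ng (Mu (Ad Ge (Ng Gf)) (Ad Ge (Ng Gf)))) (Ng (Ni 4)))) (Ng (Mu (Mu (Ad Gh (Ng (Ni 2))) (Ad Gh (Ni 2))) (Mu (Ad (Ad Ge Gf) (Ng (Ni 2))) (Ad (Ad Ge Gf) (Ni 2)))))))) @ zscl (-1) (ztonf (Ni 0))) = []"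
  by code_simp

lemma CI5: "znorm (ztonf (Ad (Ad (Mu (Mu (Ad Gh (Ng (Ni 2))) (Ad Gh (Ni 2))) (Ad (Mu (Ad Gh (Ni 2)) (Mu Gf Gf)) (Ng (Mu (Ad Gh (Ng (Ni 2))) (Mu Ge Ge))))) (Ng (Mu (Ad (Mu (Ad Gh (Ni 2)) (Mu Gf Gf)) (Ng (Mu (Ad Gh (Ng (Ni 2))) (Mu Ge Ge)))) (Mu (Ad Gh (Ng (Ni 2))) (Ad Gh (Ni 2)))))) (Mu (Ni 4) (Ad (Mu (Mu (Ad Gh (Ng (Ni 2))) (Ad Gh (Ni 2))) (Mu (Ad (Ad Ge Gf) (Ng (Ni 2))) (Ad (Ad Ge Gf) (Ni 2)))) (Ng (Mu (Ad (Ng (Mu (Ad Ge (Ng Gf)) (Ad Ge (Ng Gf)))) (Ng (Ni 4))) (Mu (Ad Gh (Ng (Ni 2))) (Ad Gh (Ni 2)))))))) @ zscl (-1) (ztonf (Ni 0))) = []"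
  by code_simp

lemma CI6: "znorm (ztonf (Ad (Ad (Mu (Ad (Ng (Mu (Ad Ge (Ng Gf)) (Ad Ge (Ng Gf)))) (Ng (Ni 4))) (Ad (Mu (Ad Gh (Ni 2)) (Mu Gf Gf)) (Ng (Mu (Ad Gh (Ng (Ni 2))) (Mu Ge Ge))))) (Ng (Mu (Ad (Mu (Ad Gh (Ni 2)) (Mu Gf Gf)) (Ng (Mu (Ad Gh (Ng (Ni 2))) (Mu Ge Ge)))) (Ad (Ng (Mu (Ad Ge (Ng Gf)) (Ad Ge (Ng Gf)))) (Ng (Ni 4)))))) (Mu (Ni 4) (Ad (Mu (Ad (Ng (Mu (Ad Ge (Ng Gf)) (Ad Ge (Ng Gf)))) (Ng (Ni 4))) (Mu (Ad Gh (Ng (Ni 2))) (Ad Gh (Ni 2)))) (Ng (Mu (Mu (Ad (Ad Ge Gf) (Ng (Ni 2))) (Ad (Ad Ge Gf) (Ni 2))) (Ad (Ng (Mu (Ad Ge (Ng Gf)) (Ad Ge (Ng Gf)))) (Ng (Ni 4)))))))) @ zscl (-1) (ztonf (Ni 0))) = []"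
  by code_simp

lemma CI7: "znorm (ztonf (Ad (Ad (Mu (Ad (Ad Ge Gf) (Ng (Ni 2))) (Ad (Ad Ge Gf) (Ni 2))) (Mu (Ad Gh (Ng (Ni 2))) (Ad Gh (Ni 2)))) (Ad (Ng (Mu (Ad Ge (Ng Gf)) (Ad Ge (Ng Gf)))) (Ng (Ni 4)))) @ zscl (-1) (ztonf (Ad (Ad (Mu (Ni 2) (Ad (Mu Ge Gf) (Mu Gf Ge))) (Mu Gh Gh)) (Ng (Ni 12))))) = []"
  by code_simp

locale sl2rep =
  fixes e f h :: "'a::ring_1"
  assumes he: "h*e = e*h + 2*e" and hf: "h*f = f*h - 2*f" and ef: "e*f = f*e + h"
begin

definition zmon :: "nat \<times> nat \<times> nat \<Rightarrow> 'a" where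
  "zmon m = (case m of (a,b,c) \<Rightarrow> e^a * h^b * f^c)"

definition znf :: "zpl \<Rightarrow> 'a" where
  "znf l = sum_list (map (\<lambda>(m,k). of_int k * zmon m) l)"

lemma zmon_Suc: "zmon (Suc a, b, c) = e * zmon (a,b,c)" by (simp add: zmon_def mult.assoc)

lemma znf_Nil[simp]: "znf [] = 0" by (simp add: znf_def)
lemma znf_Cons[simp]: "znf (p # l) = of_int (snd p) * zmon (fst p) + znf l"
  by (simp add: znf_def split: prod.splits)
lemma znf_append[simp]: "znf (l1 @ l2) = znf l1 + znf l2"
  by (induction l1) (auto simp: algebra_simps)
lemma znf_concat: "znf (concat ls) = sum_list (map znf ls)"
  by (induction ls) auto
lemma znf_scl: "znf (zscl k l) = of_int k * znf l"
  by (induction l) (auto simp: zscl_def distrib_left mult.assoc[symmetric])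
lemma znf_le: "znf (zle l) = e * znf l"
proof (induction l)
  case (Cons p l)
  obtain a b c k where p: "p = ((a,b,c),k)" by (metis prod.exhaust)
  show ?case using Cons by (simp add: zle_def p zmon_Suc distrib_left oi_comm)
qed (simp add: zle_def)

lemma znf_lhm: "znf (zlhm a b c) = h * zmon (a,b,c)"
proof (induction a)
  case 0 then show ?case by (simp add: zmon_def mult.assoc)
next
  case (Suc a)
  have "h * zmon (Suc a, b, c) = (h*e) * zmon (a,b,c)" by (simp add: zmon_def mult.assoc)
  also have "\<dots> = e * (h * zmon (a,b,c)) + 2 * zmon (Suc a,b,c)"
    by (simp add: he zmon_def algebra_simps)
  finally show ?case using Suc by (simp add: znf_le)
qed

lemma znf_lh: "znf (zlh l) = h * znf l"
proof (induction l)
  case (Cons p l)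
  obtain a b c k where p: "p = ((a,b,c),k)" by (metis prod.exhaust)
  show ?case using Cons by (simp add: zlh_def p znf_scl znf_lhm distrib_left oi_comm)
qed (simp add: zlh_def)

lemma znf_lfm: "znf (zlfm a b c) = f * zmon (a,b,c)"
proof (induction a b c rule: zlfm.induct)
  case (1 c) then show ?case by (simp add: zmon_def power_commutes)
next
  case (2 b c)
  have "f * zmon (0, Suc b, c) = (f*h) * zmon (0,b,c)" by (simp add: zmon_def mult.assoc)
  also have "f*h = h*f + 2*f" using hf by (simp add: algebra_simps)
  finally have "f * zmon (0, Suc b, c) = h * (f * zmon (0,b,c)) + 2 * (f * zmon (0,b,c))"
    by (simp add: distrib_right mult.assoc)
  then show ?case using 2 by (simp add: znf_lh znf_scl)
next
  case (3 a b c)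
  have "f * zmon (Suc a, b, c) = (f*e) * zmon (a,b,c)" by (simp add: zmon_def mult.assoc)
  also have "f*e = e*f - h" using ef by (simp add: algebra_simps)
  finally have F1: "f * zmon (Suc a, b, c) = e * (f * zmon (a,b,c)) - h * zmon (a,b,c)"
    by (simp add: left_diff_distrib mult.assoc)
  have F2: "znf (zlfm (Suc a) b c) = e * znf (zlfm a b c) - h * zmon (a,b,c)"
    by (simp only: zlfm.simps znf_append znf_le znf_scl znf_lhm) simp
  show ?case by (simp only: F1 F2 3)
qed

lemma znf_lf: "znf (zlf l) = f * znf l"
proof (induction l)
  case (Cons p l)
  obtain a b c k where p: "p = ((a,b,c),k)" by (metis prod.exhaust)
  have "zlf (p # l) = zscl k (zlfm a b c) @ zlf l" by (simp add: zlf_def p)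
  then have "znf (zlf (p # l)) = of_int k * (f * zmon (a,b,c)) + f * znf l"
    by (simp only: znf_append znf_scl znf_lfm Cons)
  then show ?case by (simp add: p distrib_left oi_comm)
qed (simp add: zlf_def)

lemma znf_regroup: "znf l = (\<Sum>m\<in>set (map fst l). of_int (zcf l m) * zmon m)"
proof (induction l)
  case Nil then show ?case by simp
next
  case (Cons p l)
  have eq: "(\<Sum>m\<in>S. of_int (zcf (p#l) m) * zmon m) =
        (\<Sum>m\<in>S. of_int (zcf l m) * zmon m) + (if fst p \<in> S then of_int (snd p) * zmon (fst p) else 0)"
    if "finite S" for S
  proof -
    have c: "of_int (zcf (p#l) m) * zmon m = of_int (zcf l m) * zmon m + (if m = fst p then of_int (snd p) * zmon m else 0)" for m
      by (simp add: zcf_def distrib_right)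
    show ?thesis unfolding c sum.distrib using that by (simp add: sum.delta)
  qed
  have nfc: "znf (p#l) = of_int (snd p) * zmon (fst p) + (\<Sum>m\<in>set (map fst l). of_int (zcf l m) * zmon m)"
    using Cons by simp
  show ?case
  proof (cases "fst p \<in> set (map fst l)")
    case True
    then have s: "set (map fst (p#l)) = set (map fst l)" by force
    have "(\<Sum>m\<in>set (map fst l). of_int (zcf (p#l) m) * zmon m) =
          (\<Sum>m\<in>set (map fst l). of_int (zcf l m) * zmon m) + of_int (snd p) * zmon (fst p)"
      using eq[of "set (map fst l)"] True by simp
    then show ?thesis unfolding nfc s by (simp only: add.commute)
  next
    case False
    have "filter (\<lambda>q. fst q = fst p) l = []" using False
      by (induction l) auto
    then have c0: "zcf l (fst p) = 0" by (simp add: zcf_def)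
    have s: "set (map fst (p#l)) = insert (fst p) (set (map fst l))" by simp
    have "(\<Sum>m\<in>insert (fst p) (set (map fst l)). of_int (zcf (p#l) m) * zmon m)
        = of_int (zcf (p#l) (fst p)) * zmon (fst p) + (\<Sum>m\<in>set (map fst l). of_int (zcf (p#l) m) * zmon m)"
      using False by (simp add: sum.insert)
    also have "zcf (p#l) (fst p) = snd p" using c0 by (simp add: zcf_def)
    also have "(\<Sum>m\<in>set (map fst l). of_int (zcf (p#l) m) * zmon m) = (\<Sum>m\<in>set (map fst l). of_int (zcf l m) * zmon m)"
      using eq[of "set (map fst l)"] False by simp
    finally show ?thesis unfolding nfc s by simp
  qed
qed

lemma znf_filter: "znf (filter (\<lambda>p. snd p \<noteq> 0) l) = znf l"
  by (induction l) auto

lemma znf_map_distinct: "distinct L \<Longrightarrow> znf (map (\<lambda>m. (m, g m)) L) = (\<Sum>m\<in>set L. of_int (g m) * zmon m)"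
  by (induction L) auto

lemma znf_norm: "znf (znorm l) = znf l"
  unfolding znorm_def znf_filter by (simp add: znf_map_distinct znf_regroup[of l])

lemma znf_zero: "znorm l = [] \<Longrightarrow> znf l = 0"
  using znf_norm[of l] by simp

lemma znf_word: "znf ((zle ^^ a) ((zlh ^^ b) ((zlf ^^ c) l))) = zmon (a,b,c) * znf l"
proof -
  have 1: "znf ((zlf ^^ c) l) = f^c * znf l" for l
    by (induction c) (auto simp: znf_lf mult.assoc)
  have 2: "znf ((zlh ^^ b) l) = h^b * znf l" for l
    by (induction b) (auto simp: znf_lh mult.assoc)
  have 3: "znf ((zle ^^ a) l) = e^a * znf l" for l
    by (induction a) (auto simp: znf_le mult.assoc)
  show ?thesis by (simp add: 1 2 3 zmon_def mult.assoc)
qed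

lemma znf_mulp: "znf (zmul l1 l2) = znf l1 * znf l2"
proof -
  have "znf (concat (map (\<lambda>((a,b,c),k). zscl k ((zle ^^ a) ((zlh ^^ b) ((zlf ^^ c) l2)))) l1)) = znf l1 * znf l2"
  proof (induction l1)
    case (Cons p l)
    obtain a b c k where p: "p = ((a,b,c),k)" by (metis prod.exhaust)
    show ?case using Cons by (simp add: p znf_scl znf_word algebra_simps)
  qed simp
  then show ?thesis by (simp add: zmul_def znf_norm)
qed

lemma znf_eqI: "znorm (l1 @ zscl (-1) l2) = [] \<Longrightarrow> znf l1 = znf l2"
  using znf_zero[of "l1 @ zscl (-1) l2"] by (simp add: znf_scl)

primrec zev :: "zex \<Rightarrow> 'a" where
  "zev Ge = e" | "zev Gf = f" | "zev Gh = h" | "zev (Ni k) = of_int k"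
| "zev (Ad x y) = zev x + zev y" | "zev (Mu x y) = zev x * zev y" | "zev (Ng x) = - zev x"

lemma zev_nf: "zev x = znf (ztonf x)"
  by (induction x) (simp_all add: zmon_def znf_mulp znf_scl)

lemma zev_eqI: "znorm (ztonf x @ zscl (-1) (ztonf y)) = [] \<Longrightarrow> zev x = zev y"
  unfolding zev_nf by (rule znf_eqI)

lemma I1: "(((((e + f) - 2) * ((e + f) + 2)) * ((h - 2) * (h + 2))) - (((h - 2) * (h + 2)) * (((e + f) - 2) * ((e + f) + 2)))) = (8 * (((h + 2) * (f * f)) - ((h - 2) * (e * e))))"
proof -
  have "zev (Ad (Mu (Mu (Ad (Ad Ge Gf) (Ng (Ni 2))) (Ad (Ad Ge Gf) (Ni 2))) (Mu (Ad Gh (Ng (Ni 2))) (Ad Gh (Ni 2)))) (Ng (Mu (Mu (Ad Gh (Ng (Ni 2))) (Ad Gh (Ni 2))) (Mu (Ad (Ad Ge Gf) (Ng (Ni 2))) (Ad (Ad Ge Gf) (Ni 2)))))) = zev (Mu (Ni 8) (Ad (Mu (Ad Gh (Ni 2)) (Mu Gf Gf)) (Ng (Mu (Ad Gh (Ng (Ni 2))) (Mu Ge Ge)))))"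
    by (rule zev_eqI) (fact CI1)
  then show ?thesis by (simp only: zev.simps of_int_numeral of_int_minus of_int_0 add_uminus_conv_diff)
qed

lemma I2: "((((h - 2) * (h + 2)) * ((- ((e - f) * (e - f))) - 4)) - (((- ((e - f) * (e - f))) - 4) * ((h - 2) * (h + 2)))) = (8 * (((h + 2) * (f * f)) - ((h - 2) * (e * e))))"
proof -
  have "zev (Ad (Mu (Mu (Ad Gh (Ng (Ni 2))) (Ad Gh (Ni 2))) (Ad (Ng (Mu (Ad Ge (Ng Gf)) (Ad Ge (Ng Gf)))) (Ng (Ni 4)))) (Ng (Mu (Ad (Ng (Mu (Ad Ge (Ng Gf)) (Ad Ge (Ng Gf)))) (Ng (Ni 4))) (Mu (Ad Gh (Ng (Ni 2))) (Ad Gh (Ni 2)))))) = zev (Mu (Ni 8) (Ad (Mu (Ad Gh (Ni 2)) (Mu Gf Gf)) (Ng (Mu (Ad Gh (Ng (Ni 2))) (Mu Ge Ge)))))"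
    by (rule zev_eqI) (fact CI2)
  then show ?thesis by (simp only: zev.simps of_int_numeral of_int_minus of_int_0 add_uminus_conv_diff)
qed

lemma I3: "((((- ((e - f) * (e - f))) - 4) * (((e + f) - 2) * ((e + f) + 2))) - ((((e + f) - 2) * ((e + f) + 2)) * ((- ((e - f) * (e - f))) - 4))) = (8 * (((h + 2) * (f * f)) - ((h - 2) * (e * e))))"
proof -
  have "zev (Ad (Mu (Ad (Ng (Mu (Ad Ge (Ng Gf)) (Ad Ge (Ng Gf)))) (Ng (Ni 4))) (Mu (Ad (Ad Ge Gf) (Ng (Ni 2))) (Ad (Ad Ge Gf) (Ni 2)))) (Ng (Mu (Mu (Ad (Ad Ge Gf) (Ng (Ni 2))) (Ad (Ad Ge Gf) (Ni 2))) (Ad (Ng (Mu (Ad Ge (Ng Gf)) (Ad Ge (Ng Gf)))) (Ng (Ni 4)))))) = zev (Mu (Ni 8) (Ad (Mu (Ad Gh (Ni 2)) (Mu Gf Gf)) (Ng (Mu (Ad Gh (Ng (Ni 2))) (Mu Ge Ge)))))"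
    by (rule zev_eqI) (fact CI3)
  then show ?thesis by (simp only: zev.simps of_int_numeral of_int_minus of_int_0 add_uminus_conv_diff)
qed

lemma I4: "((((((e + f) - 2) * ((e + f) + 2)) * (((h + 2) * (f * f)) - ((h - 2) * (e * e)))) - ((((h + 2) * (f * f)) - ((h - 2) * (e * e))) * (((e + f) - 2) * ((e + f) + 2)))) + (4 * (((((e + f) - 2) * ((e + f) + 2)) * ((- ((e - f) * (e - f))) - 4)) - (((h - 2) * (h + 2)) * (((e + f) - 2) * ((e + f) + 2)))))) = 0"
proof -
  have "zev (Ad (Ad (Mu (Mu (Ad (Ad Ge Gf) (Ng (Ni 2))) (Ad (Ad Ge Gf) (Ni 2))) (Ad (Mu (Ad Gh (Ni 2)) (Mu Gf Gf)) (Ng (Mu (Ad Gh (Ng (Ni 2))) (Mu Ge Ge))))) (Ng (Mu (Ad (Mu (Ad Gh (Ni 2)) (Mu Gf Gf)) (Ng (Mu (Ad Gh (Ng (Ni 2))) (Mu Ge Ge)))) (Mu (Ad (Ad Ge Gf) (Ng (Ni 2))) (Ad (Ad Ge Gf) (Ni 2)))))) (Mu (Ni 4) (Ad (Mu (Mu (Ad (Ad Ge Gf) (Ng (Ni 2))) (Ad (Ad Ge Gf) (Ni 2))) (Ad (Ng (Mu (Ad Ge (Ng Gf)) (Ad Ge (Ng Gf)))) (Ng (Ni 4)))) (Ng (Mu (Mu (Ad Gh (Ng (Ni 2))) (Ad Gh (Ni 2))) (Mu (Ad (Ad Ge Gf) (Ng (Ni 2))) (Ad (Ad Ge Gf) (Ni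 2)))))))) = zev (Ni 0)"
    by (rule zev_eqI) (fact CI4)
  then show ?thesis by (simp only: zev.simps of_int_numeral of_int_minus of_int_0 add_uminus_conv_diff)
qed

lemma I5: "(((((h - 2) * (h + 2)) * (((h + 2) * (f * f)) - ((h - 2) * (e * e)))) - ((((h + 2) * (f * f)) - ((h - 2) * (e * e))) * ((h - 2) * (h + 2)))) + (4 * ((((h - 2) * (h + 2)) * (((e + f) - 2) * ((e + f) + 2))) - (((- ((e - f) * (e - f))) - 4) * ((h - 2) * (h + 2)))))) = 0"
proof -
  have "zev (Ad (Ad (Mu (Mu (Ad Gh (Ng (Ni 2))) (Ad Gh (Ni 2))) (Ad (Mu (Ad Gh (Ni 2)) (Mu Gf Gf)) (Ng (Mu (Ad Gh (Ng (Ni 2))) (Mu Ge Ge))))) (Ng (Mu (Ad (Mu (Ad Gh (Ni 2)) (Mu Gf Gf)) (Ng (Mu (Ad Gh (Ng (Ni 2))) (Mu Ge Ge)))) (Mu (Ad Gh (Ng (Ni 2))) (Ad Gh (Ni 2)))))) (Mu (Ni 4) (Ad (Mu (Mu (Ad Gh (Ng (Ni 2))) (Ad Gh (Ni 2))) (Mu (Ad (Ad Ge Gf) (Ng (Ni 2))) (Ad (Ad Ge Gf) (Ni 2)))) (Ng (Mu (Ad (Ng (Mu (Ad Ge (Ng Gf)) (Ad Ge (Ng Gf)))) (Ng (Ni 4))) (Mu (Ad Gh (Ng (Ni 2))) (Ad Gh (Ni 2)))))))) = zev (Ni 0)"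
    by (rule zev_eqI) (fact CI5)
  then show ?thesis by (simp only: zev.simps of_int_numeral of_int_minus of_int_0 add_uminus_conv_diff)
qed

lemma I6: "(((((- ((e - f) * (e - f))) - 4) * (((h + 2) * (f * f)) - ((h - 2) * (e * e)))) - ((((h + 2) * (f * f)) - ((h - 2) * (e * e))) * ((- ((e - f) * (e - f))) - 4))) + (4 * ((((- ((e - f) * (e - f))) - 4) * ((h - 2) * (h + 2))) - ((((e + f) - 2) * ((e + f) + 2)) * ((- ((e - f) * (e - f))) - 4))))) = 0"
proof -
  have "zev (Ad (Ad (Mu (Ad (Ng (Mu (Ad Ge (Ng Gf)) (Ad Ge (Ng Gf)))) (Ng (Ni 4))) (Ad (Mu (Ad Gh (Ni 2)) (Mu Gf Gf)) (Ng (Mu (Ad Gh (Ng (Ni 2))) (Mu Ge Ge))))) (Ng (Mu (Ad (Mu (Ad Gh (Ni 2)) (Mu Gf Gf)) (Ng (Mu (Ad Gh (Ng (Ni 2))) (Mu Ge Ge)))) (Ad (Ng (Mu (Ad Ge (Ng Gf)) (Ad Ge (Ng Gf)))) (Ng (Ni 4)))))) (Mu (Ni 4) (Ad (Mu (Ad (Ng (Mu (Ad Ge (Ng Gf)) (Ad Ge (Ng Gf)))) (Ng (Ni 4))) (Mu (Ad Gh (Ng (Ni 2))) (Ad Gh (Ni 2)))) (Ng (Mu (Mu (Ad (Ad Ge Gf) (Ng (Ni 2))) (Ad (Ad Ge Gf) (Ni 2))) (Ad (Ng (Mu (Ad Ge (Ng Gf)) (Ad Ge (Ng Gf)))) (Ng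 (Ni 4)))))))) = zev (Ni 0)"
    by (rule zev_eqI) (fact CI6)
  then show ?thesis by (simp only: zev.simps of_int_numeral of_int_minus of_int_0 add_uminus_conv_diff)
qed

lemma I7: "(((((e + f) - 2) * ((e + f) + 2)) + ((h - 2) * (h + 2))) + ((- ((e - f) * (e - f))) - 4)) = (((2 * ((e * f) + (f * e))) + (h * h)) - 12)"
proof -
  have "zev (Ad (Ad (Mu (Ad (Ad Ge Gf) (Ng (Ni 2))) (Ad (Ad Ge Gf) (Ni 2))) (Mu (Ad Gh (Ng (Ni 2))) (Ad Gh (Ni 2)))) (Ad (Ng (Mu (Ad Ge (Ng Gf)) (Ad Ge (Ng Gf)))) (Ng (Ni 4)))) = zev (Ad (Ad (Mu (Ni 2) (Ad (Mu Ge Gf) (Mu Gf Ge))) (Mu Gh Gh)) (Ng (Ni 12)))"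
    by (rule zev_eqI) (fact CI7)
  then show ?thesis by (simp only: zev.simps of_int_numeral of_int_minus of_int_0 add_uminus_conv_diff)
qed

end


definition class_ring :: "('a::ring_1) ring" where
  "class_ring = \<lparr>carrier = UNIV, mult = (*), one = 1, zero = 0, add = (+)\<rparr>"

lemma class_ring_simps[simp]:
  "carrier (class_ring :: 'a::ring_1 ring) = UNIV"
  "mult (class_ring :: 'a::ring_1 ring) = (*)"
  "one (class_ring :: 'a::ring_1 ring) = 1"
  "zero (class_ring :: 'a::ring_1 ring) = 0"
  "add (class_ring :: 'a::ring_1 ring) = (+)"
  by (simp_all add: class_ring_def)

lemma ring_class_ring: "ring (class_ring :: 'a::ring_1 ring)"
proof (rule ringI)
  show "abelian_group (class_ring :: 'a ring)"
    by (rule abelian_groupI) (auto simp: algebra_simps intro: exI[of _ "- x" for x])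
  show "monoid (class_ring :: 'a ring)"
    by (rule monoidI) (auto simp: mult.assoc)
qed (auto simp: algebra_simps)

lemma free_ring_class: "free_ring = class_ring"
  by (simp add: free_ring_def class_ring_def)

lemma ring_free: "ring free_ring"
  by (simp add: free_ring_class ring_class_ring)

lemma free_simps[simp]:
  "carrier free_ring = UNIV" "mult free_ring = (*)" "one free_ring = 1"
  "zero free_ring = 0" "add free_ring = (+)"
  by (simp_all add: free_ring_def)

lemma class_a_inv: "a_inv (class_ring :: 'a::ring_1 ring) x = - x"
proof -
  interpret R: ring "class_ring :: 'a ring" by (rule ring_class_ring)
  show ?thesis by (rule R.minus_equality) auto
qed

lemma free_a_inv: "a_inv free_ring x = - x"
  by (simp add: free_ring_class class_a_inv)

lemma nil_zero: "([] :: 'g list) = 0" by (simp add: zero_list_def)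

lemma scal_zero[simp]: "scal 0 = 0" by (simp add: scal_def)
lemma scal_one[simp]: "scal 1 = 1" by (simp add: scal_def nil_zero)
lemma scal_add: "scal (a + b) = scal a + scal b" by (simp add: scal_def single_add)
lemma scal_mult: "scal (a * b) = scal a * scal b"
  by (simp add: scal_def mult_single nil_zero)
lemma scal_numeral: "scal (numeral n) = numeral n"
  by (simp add: scal_def nil_zero)

lemma single_mult_list: "Poly_Mapping.single v a * Poly_Mapping.single w b = Poly_Mapping.single (v @ w) (a * b)"
  by (simp add: mult_single plus_list_def)

lemma update_eq_add: "a \<notin> Poly_Mapping.keys f \<Longrightarrow> Poly_Mapping.update a b f = f + Poly_Mapping.single a b"
  by (rule poly_mapping_eqI) (auto simp: lookup_update lookup_add lookup_single not_in_keys_iff_lookup_eq_zero when_def)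

lemma scal_comm: "scal c * p = p * (scal c :: 'g freealg)"
proof (induction p rule: update_induct)
  case const then show ?case by simp
next
  case (update f a b)
  then show ?case
    by (simp add: update_eq_add distrib_left distrib_right scal_def single_mult_list mult.commute)
qed

lemma single_cons: "Poly_Mapping.single (x # w) (1::complex) = gen x * Poly_Mapping.single w 1"
  by (simp add: gen_def single_mult_list)

lemma single_scal: "Poly_Mapping.single w c = scal c * Poly_Mapping.single w 1"
  by (simp add: scal_def single_mult_list)

lemma single_nil: "Poly_Mapping.single [] c = scal c" by (simp add: scal_def)

lemma hom_unique:
  fixes g1 g2 :: "'g freealg \<Rightarrow> 'b"
  assumes S: "ring S" and h1: "g1 \<in> ring_hom free_ring S" and h2: "g2 \<in> ring_hom free_ring S"
    and gen: "\<And>a. g1 (gen a) = g2 (gen a)" and sc: "\<And>c. g1 (scal c) = g2 (scal c)"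
  shows "g1 p = g2 p"
proof -
  have m1: "g1 (x * y) = g1 x \<otimes>\<^bsub>S\<^esub> g1 y" for x y using ring_hom_memE(2)[OF h1] by simp
  have m2: "g2 (x * y) = g2 x \<otimes>\<^bsub>S\<^esub> g2 y" for x y using ring_hom_memE(2)[OF h2] by simp
  have a1: "g1 (x + y) = g1 x \<oplus>\<^bsub>S\<^esub> g1 y" for x y using ring_hom_memE(3)[OF h1] by simp
  have a2: "g2 (x + y) = g2 x \<oplus>\<^bsub>S\<^esub> g2 y" for x y using ring_hom_memE(3)[OF h2] by simp
  have w: "g1 (Poly_Mapping.single w 1) = g2 (Poly_Mapping.single w 1)" for w
  proof (induction w)
    case Nil then show ?case using sc[of 1] by (simp add: single_nil)
  next
    case (Cons x w) then show ?case by (simp add: single_cons m1 m2 gen)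
  qed
  have s: "g1 (Poly_Mapping.single w c) = g2 (Poly_Mapping.single w c)" for w c
    by (subst (1 2) single_scal) (simp add: m1 m2 sc w)
  show ?thesis
  proof (induction p rule: update_induct)
    case const then show ?case using sc[of 0] by simp
  next
    case (update f a b) then show ?case by (simp add: update_eq_add a1 a2 s)
  qed
qed

section \<open>Extension to homomorphisms\<close>

definition wimg :: "('g \<Rightarrow> 'b::ring_1) \<Rightarrow> 'g list \<Rightarrow> 'b" where
  "wimg \<phi> w = prod_list (map \<phi> w)"

definition fext :: "(complex \<Rightarrow> 'b::ring_1) \<Rightarrow> ('g \<Rightarrow> 'b) \<Rightarrow> 'g freealg \<Rightarrow> 'b" where
  "fext sc \<phi> p = (\<Sum>w\<in>Poly_Mapping.keys p. sc (Poly_Mapping.lookup p w) * wimg \<phi> w)"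

lemma wimg_append: "wimg \<phi> (v @ w) = wimg \<phi> v * wimg \<phi> w"
  by (simp add: wimg_def)

locale scalhom =
  fixes sc :: "complex \<Rightarrow> 'b::ring_1" and \<phi> :: "'g \<Rightarrow> 'b"
  assumes sc_add: "sc (a + b) = sc a + sc b" and sc_mult: "sc (a * b) = sc a * sc b"
    and sc_one: "sc 1 = 1" and sc_comm: "sc a * x = x * sc a"
begin

lemma sc_zero[simp]: "sc 0 = 0"
  using sc_add[of 0 0] by simp

lemma fext_superset: "finite S \<Longrightarrow> Poly_Mapping.keys p \<subseteq> S \<Longrightarrow> fext sc \<phi> p = (\<Sum>w\<in>S. sc (Poly_Mapping.lookup p w) * wimg \<phi> w)"
  unfolding fext_def
  by (rule sum.mono_neutral_left) (auto simp: in_keys_iff)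

lemma fext_add: "fext sc \<phi> (p + q) = fext sc \<phi> p + fext sc \<phi> q"
proof -
  let ?S = "Poly_Mapping.keys p \<union> Poly_Mapping.keys q"
  have f: "finite ?S" by simp
  have "fext sc \<phi> (p + q) = (\<Sum>w\<in>?S. sc (Poly_Mapping.lookup (p+q) w) * wimg \<phi> w)"
    using keys_add[of p q] by (intro fext_superset) auto
  also have "\<dots> = (\<Sum>w\<in>?S. sc (Poly_Mapping.lookup p w) * wimg \<phi> w) + (\<Sum>w\<in>?S. sc (Poly_Mapping.lookup q w) * wimg \<phi> w)"
    by (simp add: lookup_add sc_add distrib_right sum.distrib)
  also have "\<dots> = fext sc \<phi> p + fext sc \<phi> q"
    by (simp add: fext_superset[symmetric])
  finally show ?thesis .
qed

lemma fext_zero[simp]: "fext sc \<phi> 0 = 0" by (simp add: fext_def)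

lemma fext_single: "fext sc \<phi> (Poly_Mapping.single w c) = sc c * wimg \<phi> w"
  by (cases "c = 0") (simp_all add: fext_def)

lemma fext_single_mult: "fext sc \<phi> (Poly_Mapping.single w c * q) = fext sc \<phi> (Poly_Mapping.single w c) * fext sc \<phi> q"
proof (induction q rule: update_induct)
  case const then show ?case by simp
next
  case (update f a b)
  have "sc (c * b) * wimg \<phi> (w @ a) = (sc c * wimg \<phi> w) * (sc b * wimg \<phi> a)"
    by (simp add: sc_mult wimg_append mult.assoc) (metis sc_comm mult.assoc)
  then show ?case using update
    by (simp add: update_eq_add distrib_left fext_add single_mult_list fext_single)
qed

lemma fext_mult: "fext sc \<phi> (p * q) = fext sc \<phi> p * fext sc \<phi> q"
proof (induction p rule: update_induct)
  case const then show ?case by simp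
next
  case (update f a b)
  then show ?case
    by (simp add: update_eq_add distrib_right fext_add fext_single_mult)
qed

lemma fext_scal: "fext sc \<phi> (scal c) = sc c"
  by (simp add: scal_def fext_single wimg_def)

lemma fext_one: "fext sc \<phi> 1 = 1"
  using fext_scal[of 1] sc_one by simp

lemma fext_gen: "fext sc \<phi> (gen a) = \<phi> a"
  by (simp add: gen_def fext_single wimg_def sc_one)

lemma fext_uminus: "fext sc \<phi> (- p) = - fext sc \<phi> p"
  using fext_add[of p "-p"] by (simp add: eq_neg_iff_add_eq_0 add.commute)

lemma fext_diff: "fext sc \<phi> (p - q) = fext sc \<phi> p - fext sc \<phi> q"
  using fext_add[of p "-q"] by (simp add: fext_uminus)

lemma fext_of_nat: "fext sc \<phi> (of_nat n) = of_nat n"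
  by (induction n) (simp_all add: fext_add fext_one)

lemma fext_numeral: "fext sc \<phi> (numeral n) = numeral n"
  using fext_of_nat[of "numeral n"] by simp

lemma fext_power: "fext sc \<phi> (p ^ n) = fext sc \<phi> p ^ n"
  by (induction n) (simp_all add: fext_one fext_mult)

lemma fext_hom: "fext sc \<phi> \<in> ring_hom free_ring class_ring"
  by (rule ring_hom_memI) (simp_all add: fext_mult fext_add fext_one)

lemma fext_kernel: "(\<And>r. r \<in> rels \<Longrightarrow> fext sc \<phi> r = 0) \<Longrightarrow> x \<in> genideal free_ring rels \<Longrightarrow> fext sc \<phi> x = 0"
proof -
  assume z: "\<And>r. r \<in> rels \<Longrightarrow> fext sc \<phi> r = 0" and x: "x \<in> genideal free_ring rels"
  have hr: "ring_hom_ring free_ring class_ring (fext sc \<phi>)"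
    by (rule ring_hom_ringI2[OF ring_free ring_class_ring fext_hom])
  have "genideal free_ring rels \<subseteq> a_kernel free_ring class_ring (fext sc \<phi>)"
    by (rule ring.genideal_minimal[OF ring_free ring_hom_ring.kernel_is_ideal[OF hr]])
       (auto simp: a_kernel_def' z)
  then show ?thesis using x by (auto simp: a_kernel_def')
qed

end


lemma ideal_gen: "ideal (genideal free_ring rels) free_ring"
  by (rule ring.genideal_ideal[OF ring_free]) simp

lemma ring_pres: "ring (pres_alg rels)"
  unfolding pres_alg_def by (rule ideal.quotient_is_ring[OF ideal_gen])

lemma cls_eq: "cls rels = a_r_coset free_ring (genideal free_ring rels)"
  by (rule ext) (simp add: cls_def)

lemma cls_hom: "cls rels \<in> ring_hom free_ring (pres_alg rels)"
  unfolding cls_eq pres_alg_def by (rule ideal.rcos_ring_hom[OF ideal_gen])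

lemma carrier_pres: "carrier (pres_alg rels) = range (cls rels)"
  by (auto simp: pres_alg_def FactRing_def A_RCOSETS_def' cls_def)

lemma cls_mult: "cls rels (x * y) = cls rels x \<otimes>\<^bsub>pres_alg rels\<^esub> cls rels y"
  using ring_hom_memE(2)[OF cls_hom] by simp
lemma cls_add: "cls rels (x + y) = cls rels x \<oplus>\<^bsub>pres_alg rels\<^esub> cls rels y"
  using ring_hom_memE(3)[OF cls_hom] by simp
lemma cls_one: "cls rels 1 = \<one>\<^bsub>pres_alg rels\<^esub>"
  using ring_hom_memE(4)[OF cls_hom] by simp
lemma cls_carrier: "cls rels x \<in> carrier (pres_alg rels)"
  by (simp add: carrier_pres)

lemma zero_in_gen: "0 \<in> genideal free_ring rels"
  using additive_subgroup.zero_closed[OF ideal.axioms(1)[OF ideal_gen]] by simp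

lemma cls_zero: "cls rels 0 = genideal free_ring rels"
  unfolding cls_def by (rule ring.a_rcos_zero[OF ring_free ideal_gen zero_in_gen])

lemma zero_pres: "\<zero>\<^bsub>pres_alg rels\<^esub> = cls rels 0"
  by (simp add: cls_zero pres_alg_def FactRing_def)

lemma cls_in_ideal: "x \<in> genideal free_ring rels \<Longrightarrow> cls rels x = cls rels 0"
  unfolding cls_zero by (simp add: cls_def ring.a_rcos_zero[OF ring_free ideal_gen])

lemma cls_rel: "r \<in> rels \<Longrightarrow> cls rels r = cls rels 0"
  by (rule cls_in_ideal) (rule ring.genideal_self[OF ring_free, of rels, simplified, THEN subsetD])

lemma cls_self: "x \<in> cls rels x"
proof -
  have "abelian_subgroup (genideal free_ring rels) free_ring"
    by (rule abelian_subgroupI3[OF ideal.axioms(1)[OF ideal_gen] ring.is_abelian_group[OF ring_free]])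
  from abelian_subgroup.a_rcos_self[OF this] show ?thesis by (simp add: cls_def)
qed

lemma cls_neg: "\<ominus>\<^bsub>pres_alg rels\<^esub> (cls rels x) = cls rels (- x)"
proof -
  interpret Q: ring "pres_alg rels" by (rule ring_pres)
  show ?thesis
    by (rule Q.minus_equality) (simp_all add: cls_add[symmetric] cls_carrier zero_pres)
qed

section \<open>The counit shows U(sl2) is nontrivial\<close>

interpretation cu: scalhom "id::complex\<Rightarrow>complex" "\<lambda>_::sl2gen. 0::complex"
  by unfold_locales (simp_all add: mult.commute)

lemma cu_rels: "r \<in> sl2_rels \<Longrightarrow> fext id (\<lambda>_. 0) r = (0::complex)"
  by (auto simp: sl2_rels_def comm_def cu.fext_diff cu.fext_mult cu.fext_gen cu.fext_add cu.fext_numeral)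

lemma one_notin: "(1::sl2gen freealg) \<notin> genideal free_ring sl2_rels"
proof
  assume "(1::sl2gen freealg) \<in> genideal free_ring sl2_rels"
  from cu.fext_kernel[OF cu_rels this] show False by (simp add: cu.fext_one)
qed

lemma cls_0_1: "cls sl2_rels 0 \<noteq> cls sl2_rels 1"
proof
  assume "cls sl2_rels 0 = cls sl2_rels 1"
  then have "1 \<in> cls sl2_rels 0" using cls_self[of 1 sl2_rels] by simp
  then show False using one_notin by (simp add: cls_zero)
qed

typedef U = "carrier (pres_alg sl2_rels)" morphisms RepU AbsU
  by (auto simp: carrier_pres)

abbreviation "QU \<equiv> pres_alg sl2_rels"

definition q :: "sl2gen freealg \<Rightarrow> U" where "q x = AbsU (cls sl2_rels x)"

lemma RepU_q: "RepU (q x) = cls sl2_rels x"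
  by (simp add: q_def AbsU_inverse cls_carrier)

lemma q_induct: "(\<And>x. P (q x)) \<Longrightarrow> P a"
proof -
  assume h: "\<And>x. P (q x)"
  have "RepU a \<in> range (cls sl2_rels)" using RepU[of a] by (simp add: carrier_pres)
  then obtain x where "RepU a = cls sl2_rels x" by auto
  then have "a = q x" by (metis RepU_inverse q_def)
  then show ?thesis using h by simp
qed

lemma q_inj: "q x = q y \<longleftrightarrow> cls sl2_rels x = cls sl2_rels y"
  by (metis RepU_q RepU_inject)

lemma RepU_Abs: "RepU (AbsU (cls sl2_rels x)) = cls sl2_rels x"
  by (simp add: AbsU_inverse cls_carrier)

instantiation U :: ring_1
begin
definition zero_U_def: "0 = q 0"
definition one_U_def: "1 = q 1"
definition plus_U_def: "a + b = AbsU (RepU a \<oplus>\<^bsub>QU\<^esub> RepU b)"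
definition times_U_def: "a * b = AbsU (RepU a \<otimes>\<^bsub>QU\<^esub> RepU b)"
definition uminus_U_def: "- a = AbsU (\<ominus>\<^bsub>QU\<^esub> RepU a)"
definition minus_U_def: "a - b = a + - (b::U)"

lemma q_add: "q (x + y) = q x + q y"
  by (simp add: plus_U_def RepU_Abs cls_add[symmetric] q_def)
lemma q_mult: "q (x * y) = q x * q y"
  by (simp add: times_U_def RepU_Abs cls_mult[symmetric] q_def)
lemma q_uminus: "q (- x) = - q x"
  by (simp add: uminus_U_def RepU_Abs cls_neg q_def)
lemma q_diff: "q (x - y) = q x - q y"
  by (simp add: minus_U_def q_add[symmetric] q_uminus[symmetric])

instance
proof
  fix a b c :: U
  show "a + b + c = a + (b + c)"
    by (induct a rule: q_induct, induct b rule: q_induct, induct c rule: q_induct) (simp add: q_add[symmetric] add.assoc)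
  show "a + b = b + a"
    by (induct a rule: q_induct, induct b rule: q_induct) (simp add: q_add[symmetric] add.commute)
  show "0 + a = a"
    by (induct a rule: q_induct) (simp add: zero_U_def q_add[symmetric])
  show "- a + a = 0"
    by (induct a rule: q_induct) (simp add: zero_U_def q_add[symmetric] q_uminus[symmetric])
  show "a - b = a + - b" by (simp add: minus_U_def)
  show "a * b * c = a * (b * c)"
    by (induct a rule: q_induct, induct b rule: q_induct, induct c rule: q_induct) (simp add: q_mult[symmetric] mult.assoc)
  show "1 * a = a"
    by (induct a rule: q_induct) (simp add: one_U_def q_mult[symmetric])
  show "a * 1 = a"
    by (induct a rule: q_induct) (simp add: one_U_def q_mult[symmetric])
  show "(a + b) * c = a * c + b * c"
    by (induct a rule: q_induct, induct b rule: q_induct, induct c rule: q_induct) (simp add: q_mult[symmetric] q_add[symmetric] distrib_right)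
  show "a * (b + c) = a * b + a * c"
    by (induct a rule: q_induct, induct b rule: q_induct, induct c rule: q_induct) (simp add: q_mult[symmetric] q_add[symmetric] distrib_left)
  show "(0::U) \<noteq> 1"
    using cls_0_1 by (simp add: zero_U_def one_U_def q_inj)
qed
end

lemma q_zero: "q 0 = 0" by (simp add: zero_U_def)
lemma q_one: "q 1 = 1" by (simp add: one_U_def)
lemma q_of_nat: "q (of_nat n) = of_nat n"
  by (induction n) (simp_all add: q_zero q_one q_add)
lemma q_numeral: "q (numeral n) = numeral n"
  using q_of_nat[of "numeral n"] by simp
lemma q_power: "q (x ^ n) = q x ^ n"
  by (induction n) (simp_all add: q_one q_mult)

lemma RepU_add: "RepU (a + b) = RepU a \<oplus>\<^bsub>QU\<^esub> RepU b"
  by (induct a rule: q_induct, induct b rule: q_induct) (simp add: q_add[symmetric] RepU_q cls_add)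
lemma RepU_mult: "RepU (a * b) = RepU a \<otimes>\<^bsub>QU\<^esub> RepU b"
  by (induct a rule: q_induct, induct b rule: q_induct) (simp add: q_mult[symmetric] RepU_q cls_mult)
lemma RepU_one: "RepU 1 = \<one>\<^bsub>QU\<^esub>"
  by (simp add: q_one[symmetric] RepU_q cls_one)
lemma RepU_zero: "RepU 0 = cls sl2_rels 0"
  by (simp add: q_zero[symmetric] RepU_q)

lemma q_rel: "r \<in> sl2_rels \<Longrightarrow> q r = 0"
  by (simp add: q_def cls_rel zero_U_def)


abbreviation "ee \<equiv> q eE"
abbreviation "ff \<equiv> q eF"
abbreviation "hh \<equiv> q eH"

lemma rel_eq: "r \<in> sl2_rels \<Longrightarrow> r = x - y \<Longrightarrow> q x = q y"
  using q_rel[of r] by (simp add: q_diff)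

interpretation sl: sl2rep ee ff hh
proof
  show "hh * ee = ee * hh + 2 * ee"
    using rel_eq[of "comm eH eE - 2 * eE" "eH * eE" "eE * eH + 2 * eE"]
    by (simp add: sl2_rels_def comm_def q_add q_mult q_numeral)
  show "hh * ff = ff * hh - 2 * ff"
    using rel_eq[of "comm eH eF + 2 * eF" "eH * eF" "eF * eH - 2 * eF"]
    by (simp add: sl2_rels_def comm_def q_diff q_mult q_numeral)
  show "ee * ff = ff * ee + hh"
    using rel_eq[of "comm eE eF - eH" "eE * eF" "eF * eE + eH"]
    by (simp add: sl2_rels_def comm_def q_add q_mult)
qed

definition scU :: "complex \<Rightarrow> U" where "scU c = q (scal c)"

lemma scal_uminus: "scal (- c) = - scal c" by (simp add: scal_def single_uminus)

lemma scU_add: "scU (a + b) = scU a + scU b" by (simp add: scU_def scal_add q_add)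
lemma scU_mult: "scU (a * b) = scU a * scU b" by (simp add: scU_def scal_mult q_mult)
lemma scU_one: "scU 1 = 1" by (simp add: scU_def q_one)
lemma scU_comm: "scU a * x = x * scU a"
  by (induct x rule: q_induct) (simp add: scU_def q_mult[symmetric] scal_comm)
lemma scU_num: "numeral n = scU (numeral n)" by (simp add: scU_def scal_numeral q_numeral)
lemma scU_uminus: "scU (- a) = - scU a" by (simp add: scU_def scal_uminus q_uminus)

lemma sc_mm: "scU a * (scU b * x) = scU (a * b) * x"
  by (simp add: scU_mult mult.assoc)
lemma sc_xx: "scU a * x * (scU b * y) = scU (a * b) * (x * y)"
  by (metis mult.assoc scU_comm scU_mult)


definition AA :: U where "AA = q (scal (1/16) * ((eE + eF - 2) * (eE + eF + 2)))"
definition BB :: U where "BB = q (scal (1/16) * ((eH - 2) * (eH + 2)))"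
definition CC :: U where "CC = q (scal (1/16) *
                 ((scal \<i> * eE - scal \<i> * eF - 2) * (scal \<i> * eE - scal \<i> * eF + 2)))"
definition DD :: U where "DD = q (scal (1/64) * ((eH + 2) * eF ^ 2 - (eH - 2) * eE ^ 2))"

lemma AA_val: "AA = scU (1/16) * (((ee + ff) - 2) * ((ee + ff) + 2))"
  by (simp add: AA_def scU_def q_mult q_add q_diff q_numeral)
lemma BB_val: "BB = scU (1/16) * ((hh - 2) * (hh + 2))"
  by (simp add: BB_def scU_def q_mult q_add q_diff q_numeral)
lemma DD_val: "DD = scU (1/64) * (((hh + 2) * (ff * ff)) - ((hh - 2) * (ee * ee)))"
  by (simp add: DD_def scU_def q_mult q_add q_diff q_numeral q_power power2_eq_square)

lemma sq_lemma: "(x - 2) * (x + 2) = x * x - (4::'a::ring_1)"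
  by (simp add: algebra_simps mult_2 mult_2_right)

lemma CC_val: "CC = scU (1/16) * ((- ((ee - ff) * (ee - ff))) - 4)"
proof -
  have 1: "CC = scU (1/16) * ((scU \<i> * ee - scU \<i> * ff - 2) * (scU \<i> * ee - scU \<i> * ff + 2))"
    by (simp add: CC_def scU_def q_mult q_add q_diff q_numeral)
  have 2: "scU \<i> * ee - scU \<i> * ff = scU \<i> * (ee - ff)" by (simp add: right_diff_distrib)
  have 3: "scU \<i> * (ee - ff) * (scU \<i> * (ee - ff)) = - ((ee - ff) * (ee - ff))"
    by (simp add: sc_xx scU_uminus scU_one)
  show ?thesis unfolding 1 2 sq_lemma 3 ..
qed

lemma L_comm:
  assumes "a * b - b * a = 8 * d"
  shows "(scU (1/16) * a) * (scU (1/16) * b) - (scU (1/16) * b) * (scU (1/16) * a) - 2 * (scU (1/64) * d) = 0"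
proof -
  have "(scU (1/16) * a) * (scU (1/16) * b) - (scU (1/16) * b) * (scU (1/16) * a) = scU (1/256) * (a * b - b * a)"
    by (simp add: sc_xx right_diff_distrib)
  also have "\<dots> = scU (1/32) * d" unfolding assms by (subst scU_num) (simp add: sc_mm)
  also have "2 * (scU (1/64) * d) = scU (1/32) * d" by (subst scU_num) (simp add: sc_mm)
  ultimately show ?thesis by simp
qed

lemma L_cent:
  assumes "(a * d - d * a) + 4 * (a * c - b * a) = 0"
  shows "((scU (1/16) * a) * (scU (1/64) * d) - (scU (1/64) * d) * (scU (1/16) * a))
          + (scU (1/16) * a) * (scU (1/16) * c) - (scU (1/16) * b) * (scU (1/16) * a) = 0"
proof -
  have "((scU (1/16) * a) * (scU (1/64) * d) - (scU (1/64) * d) * (scU (1/16) * a))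
          + (scU (1/16) * a) * (scU (1/16) * c) - (scU (1/16) * b) * (scU (1/16) * a)
       = scU (1/1024) * (a * d - d * a) + scU (1/256) * (a * c - b * a)"
    by (simp add: sc_xx right_diff_distrib)
  also have "scU (1/256) * (a * c - b * a) = scU (1/1024) * (4 * (a * c - b * a))"
    by (subst scU_num) (simp add: sc_mm)
  also have "scU (1/1024) * (a * d - d * a) + scU (1/1024) * (4 * (a * c - b * a)) = 0"
    unfolding distrib_left[symmetric] assms by simp
  finally show ?thesis .
qed


fun phiR :: "racahgen \<Rightarrow> U" where
  "phiR RA = AA" | "phiR RB = BB" | "phiR RC = CC" | "phiR RD = DD"

interpretation sr: scalhom scU phiR
proof
  show "scU (a + b) = scU a + scU b" for a b by (rule scU_add)
  show "scU (a * b) = scU a * scU b" for a b by (rule scU_mult)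
  show "scU 1 = 1" by (rule scU_one)
  show "scU a * x = x * scU a" for a x by (rule scU_comm)
qed

abbreviation "Psi \<equiv> fext scU phiR"

lemmas Psi_simps = sr.fext_diff sr.fext_add sr.fext_mult sr.fext_gen sr.fext_numeral

lemma Psi_alpha: "Psi r_alpha = 0"
  unfolding r_alpha_def comm_def Psi_simps phiR.simps AA_val BB_val CC_val DD_val
  by (rule L_cent[OF sl.I4])
lemma Psi_beta: "Psi r_beta = 0"
  unfolding r_beta_def comm_def Psi_simps phiR.simps AA_val BB_val CC_val DD_val
  by (rule L_cent[OF sl.I5])
lemma Psi_gamma: "Psi r_gamma = 0"
  unfolding r_gamma_def comm_def Psi_simps phiR.simps AA_val BB_val CC_val DD_val
  by (rule L_cent[OF sl.I6])

lemma Psi_rels: "r \<in> racah_rels \<Longrightarrow> Psi r = 0"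
proof -
  assume "r \<in> racah_rels"
  then consider "r = comm rA rB - 2 * rD" | "r = comm rB rC - 2 * rD" | "r = comm rC rA - 2 * rD"
    | x r0 where "r = comm r0 x" "r0 \<in> {r_alpha, r_beta, r_gamma}"
    unfolding racah_rels_def by blast
  then show ?thesis
  proof cases
    case 1
    have "Psi (comm rA rB - 2 * rD) = 0"
      unfolding comm_def Psi_simps phiR.simps AA_val BB_val CC_val DD_val
      by (rule L_comm[OF sl.I1])
    then show ?thesis using 1 by simp
  next
    case 2
    have "Psi (comm rB rC - 2 * rD) = 0"
      unfolding comm_def Psi_simps phiR.simps AA_val BB_val CC_val DD_val
      by (rule L_comm[OF sl.I2])
    then show ?thesis using 2 by simp
  next
    case 3
    have "Psi (comm rC rA - 2 * rD) = 0"
      unfolding comm_def Psi_simps phiR.simps AA_val BB_val CC_val DD_val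
      by (rule L_comm[OF sl.I3])
    then show ?thesis using 3 by simp
  next
    case 4
    then have "Psi r0 = 0" using Psi_alpha Psi_beta Psi_gamma by auto
    then show ?thesis using 4 by (simp add: comm_def Psi_simps)
  qed
qed

lemma casimir_val: "q (scal (1/8) * (casimir - 6)) = scU (1/8) * (ee * ff + ff * ee + scU (1/2) * (hh * hh) - 6)"
  by (simp add: casimir_def scU_def q_mult q_add q_diff q_numeral q_power power2_eq_square)

lemma Psi_delta: "Psi r_delta = q (scal (1/8) * (casimir - 6))"
proof -
  have "Psi r_delta = scU (1/16) * ((((ee + ff) - 2) * ((ee + ff) + 2)) + ((hh - 2) * (hh + 2)) + ((- ((ee - ff) * (ee - ff))) - 4))"
    unfolding r_delta_def Psi_simps phiR.simps AA_val BB_val CC_val by (simp add: distrib_left)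
  also have "\<dots> = scU (1/16) * ((2 * ((ee * ff) + (ff * ee)) + (hh * hh)) - 12)"
    using sl.I7 by simp
  also have "\<dots> = scU (1/8) * (ee * ff + ff * ee + scU (1/2) * (hh * hh) - 6)"
    by (subst (1 2 3) scU_num) (simp add: sc_mm distrib_left right_diff_distrib scU_one scU_mult[symmetric])
  finally show ?thesis by (simp add: casimir_val)
qed


lemma Psi_kernel: "x \<in> genideal free_ring racah_rels \<Longrightarrow> Psi x = 0"
  by (rule sr.fext_kernel[OF Psi_rels])

definition f0 :: "racahgen freealg set \<Rightarrow> sl2gen freealg set" where
  "f0 = (\<lambda>X \<in> carrier (pres_alg racah_rels). the_elem ((\<lambda>x. RepU (Psi x)) ` X))"

lemma f0_cls: "f0 (cls racah_rels x) = RepU (Psi x)"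
proof -
  have c: "cls racah_rels x = (\<Union>h\<in>genideal free_ring racah_rels. {h + x})"
    by (simp add: cls_def a_r_coset_def')
  have img: "(\<lambda>y. RepU (Psi y)) ` cls racah_rels x = {RepU (Psi x)}"
    unfolding c using zero_in_gen[of racah_rels] by (auto simp: sr.fext_add Psi_kernel)
  show ?thesis by (simp add: f0_def cls_carrier img)
qed

lemma carrier_R: "X \<in> carrier (pres_alg rels) \<Longrightarrow> \<exists>x. X = cls rels x"
  by (auto simp: carrier_pres)

lemma f0_hom: "calg_hom racah_rels sl2_rels f0"
  unfolding calg_hom_def
proof (intro conjI allI)
  show "f0 \<in> ring_hom (pres_alg racah_rels) (pres_alg sl2_rels)"
  proof (rule ring_hom_memI)
    fix X assume "X \<in> carrier (pres_alg racah_rels)"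
    then obtain x where x: "X = cls racah_rels x" using carrier_R by blast
    show "f0 X \<in> carrier (pres_alg sl2_rels)" by (simp add: x f0_cls RepU)
  next
    fix X Y assume "X \<in> carrier (pres_alg racah_rels)" "Y \<in> carrier (pres_alg racah_rels)"
    then obtain x y where x: "X = cls racah_rels x" and y: "Y = cls racah_rels y" using carrier_R by blast
    show "f0 (X \<otimes>\<^bsub>pres_alg racah_rels\<^esub> Y) = f0 X \<otimes>\<^bsub>pres_alg sl2_rels\<^esub> f0 Y"
      by (simp add: x y cls_mult[symmetric] f0_cls sr.fext_mult RepU_mult)
    show "f0 (X \<oplus>\<^bsub>pres_alg racah_rels\<^esub> Y) = f0 X \<oplus>\<^bsub>pres_alg sl2_rels\<^esub> f0 Y"
      by (simp add: x y cls_add[symmetric] f0_cls sr.fext_add RepU_add)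
  next
    show "f0 \<one>\<^bsub>pres_alg racah_rels\<^esub> = \<one>\<^bsub>pres_alg sl2_rels\<^esub>"
      by (simp add: cls_one[symmetric] f0_cls sr.fext_one RepU_one)
  qed
  show "f0 \<in> extensional (carrier (pres_alg racah_rels))" by (simp add: f0_def)
  fix c
  show "f0 (cls racah_rels (scal c)) = cls sl2_rels (scal c)"
    by (simp add: f0_cls sr.fext_scal scU_def RepU_q)
qed

lemma Psi_RepU_hom: "(\<lambda>x. RepU (Psi x)) \<in> ring_hom free_ring (pres_alg sl2_rels)"
  by (rule ring_hom_memI) (simp_all add: RepU sr.fext_mult sr.fext_add sr.fext_one RepU_mult RepU_add RepU_one)

lemma agree:
  assumes h: "calg_hom racah_rels sl2_rels g"
    and gA: "g (cls racah_rels rA) = cls sl2_rels (scal (1/16) * ((eE + eF - 2) * (eE + eF + 2)))"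
    and gB: "g (cls racah_rels rB) = cls sl2_rels (scal (1/16) * ((eH - 2) * (eH + 2)))"
    and gC: "g (cls racah_rels rC) = cls sl2_rels (scal (1/16) *
                 ((scal \<i> * eE - scal \<i> * eF - 2) * (scal \<i> * eE - scal \<i> * eF + 2)))"
    and gD: "g (cls racah_rels rD) = cls sl2_rels (scal (1/64) *
                 ((eH + 2) * eF ^ 2 - (eH - 2) * eE ^ 2))"
  shows "g (cls racah_rels x) = RepU (Psi x)"
proof -
  have gh: "g \<in> ring_hom (pres_alg racah_rels) (pres_alg sl2_rels)"
    and gs: "\<And>c. g (cls racah_rels (scal c)) = cls sl2_rels (scal c)"
    using h by (auto simp: calg_hom_def)
  have "(g \<circ> cls racah_rels) x = RepU (Psi x)"
  proof (rule hom_unique[OF ring_pres ring_hom_trans[OF cls_hom gh] Psi_RepU_hom])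
    fix a show "(g \<circ> cls racah_rels) (gen a) = RepU (Psi (gen a))"
      by (cases a) (simp_all add: sr.fext_gen gA gB gC gD AA_def BB_def CC_def DD_def RepU_q)
  next
    fix c show "(g \<circ> cls racah_rels) (scal c) = RepU (Psi (scal c))"
      by (simp add: gs sr.fext_scal scU_def RepU_q)
  qed
  then show ?thesis by simp
qed


theorem theorem1p3:
  shows "(\<exists>!f. calg_hom racah_rels sl2_rels f
            \<and> f (cls racah_rels rA) = cls sl2_rels (scal (1/16) * ((eE + eF - 2) * (eE + eF + 2)))
            \<and> f (cls racah_rels rB) = cls sl2_rels (scal (1/16) * ((eH - 2) * (eH + 2)))
            \<and> f (cls racah_rels rC) = cls sl2_rels (scal (1/16) *
                 ((scal \<i> * eE - scal \<i> * eF - 2) * (scal \<i> * eE - scal \<i> * eF + 2)))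
            \<and> f (cls racah_rels rD) = cls sl2_rels (scal (1/64) *
                 ((eH + 2) * eF ^ 2 - (eH - 2) * eE ^ 2)))
       \<and> (\<forall>f. calg_hom racah_rels sl2_rels f
            \<and> f (cls racah_rels rA) = cls sl2_rels (scal (1/16) * ((eE + eF - 2) * (eE + eF + 2)))
            \<and> f (cls racah_rels rB) = cls sl2_rels (scal (1/16) * ((eH - 2) * (eH + 2)))
            \<and> f (cls racah_rels rC) = cls sl2_rels (scal (1/16) *
                 ((scal \<i> * eE - scal \<i> * eF - 2) * (scal \<i> * eE - scal \<i> * eF + 2)))
            \<and> f (cls racah_rels rD) = cls sl2_rels (scal (1/64) *
                 ((eH + 2) * eF ^ 2 - (eH - 2) * eE ^ 2))
          \<longrightarrow> f (cls racah_rels r_alpha) = cls sl2_rels 0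
            \<and> f (cls racah_rels r_beta) = cls sl2_rels 0
            \<and> f (cls racah_rels r_gamma) = cls sl2_rels 0
            \<and> f (cls racah_rels r_delta) = cls sl2_rels (scal (1/8) * (casimir - 6)))"
proof -
  let ?P = "\<lambda>f. calg_hom racah_rels sl2_rels f
            \<and> f (cls racah_rels rA) = cls sl2_rels (scal (1/16) * ((eE + eF - 2) * (eE + eF + 2)))
            \<and> f (cls racah_rels rB) = cls sl2_rels (scal (1/16) * ((eH - 2) * (eH + 2)))
            \<and> f (cls racah_rels rC) = cls sl2_rels (scal (1/16) *
                 ((scal \<i> * eE - scal \<i> * eF - 2) * (scal \<i> * eE - scal \<i> * eF + 2)))
            \<and> f (cls racah_rels rD) = cls sl2_rels (scal (1/64) *
                 ((eH + 2) * eF ^ 2 - (eH - 2) * eE ^ 2))"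
  have P0: "?P f0"
    using f0_hom by (simp add: f0_cls sr.fext_gen AA_def BB_def CC_def DD_def RepU_q)
  have ag: "g (cls racah_rels x) = RepU (Psi x)" if "?P g" for g x
    using that agree by blast
  have uniq: "g = f0" if "?P g" for g
  proof (rule extensionalityI)
    show "g \<in> extensional (carrier (pres_alg racah_rels))" using that by (simp add: calg_hom_def)
    show "f0 \<in> extensional (carrier (pres_alg racah_rels))" using f0_hom by (simp add: calg_hom_def)
    fix X assume "X \<in> carrier (pres_alg racah_rels)"
    then obtain x where "X = cls racah_rels x" using carrier_R by blast
    then show "g X = f0 X" using ag[OF that] by (simp add: f0_cls)
  qed
  have sec: "g (cls racah_rels r_alpha) = cls sl2_rels 0
            \<and> g (cls racah_rels r_beta) = cls sl2_rels 0
            \<and> g (cls racah_rels r_gamma) = cls sl2_rels 0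
            \<and> g (cls racah_rels r_delta) = cls sl2_rels (scal (1/8) * (casimir - 6))" if "?P g" for g
    using ag[OF that] by (simp add: Psi_alpha Psi_beta Psi_gamma Psi_delta RepU_zero RepU_q)
  have E: "\<exists>!f. ?P f" by (rule ex1I[of _ f0]) (fact P0, erule uniq)
  show ?thesis by (rule conjI[OF E]) (use sec in blast)
qed

end
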